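(* There is a universal constant $C>0$ such that for every $m\ge0$, every $\Lambda>0$ and every $\psi\in\mathcal H$ lying in the $m$-photon sector with $\|p\psi\|<\infty$ and $(\psi,H_f\psi)<\infty$, \[ \big(p\cdot D^*\psi,\,(p^2+H_f)^{-1}\,p\cdot D^*\psi\big)\le C\Lambda\big(\|p\psi\|^2+(\psi,H_f\psi)\big), \] where $p\cdot D^*=\sum_{j=1}^3 p_jD_j^*$.
   Context: $p=-i\nabla_x$. Hilbert space $\mathcal H = L^2(\mathbb R^3;\mathbb C^2)\otimes\mathcal F_b(L^2(\mathbb R^3;\mathbb C^2))$ with bosonic operators $a_\lambda(k),a^*_\lambda(k)$ ($\lambda=1,2$) obeying the canonical commutation relations; the $m$-photon sector is the subspace of vectors whose Fock component is an $m$-particle state. Polarization vectors $\varepsilon_\lambda(k)\in\mathbb R^3$ with $\{k/|k|,\varepsilon_1(k),\varepsilon_2(k)\}$ orthonormal and $\varepsilon_\lambda(-k)=\pm\varepsilon_\lambda(k)$. $\chi(|k|)=1$ for $|k|\le\Lambda$, $0$ otherwise. $G^\lambda(k)=\frac{\chi(|k|)}{2\pi|k|^{1/2}}\varepsilon_\lambda(k)$, $D(x)=\sum_\lambda\int G^\lambda(k)e^{ik\cdot x}a_\lambda(k)dk$ (a vector of operators) with adjoint $D^*$. $H_f=\sum_\lambda\int|k|a^*_\lambda(k)a_\lambda(k)dk$. *)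

theory Defs
  imports "HOL-Analysis.Analysis"
begin

text \<open>An m-photon vector is a function
  psi sigma L P K, with electron spin sigma in {1,2}, photon polarization labels
  L in {..<m} ->E {1,2}, electron momentum P in R^3 and photon momenta
  K in {..<m} ->E R^3.\<close>

type_synonym state = "nat \<Rightarrow> (nat \<Rightarrow> nat) \<Rightarrow> real^3 \<Rightarrow> (nat \<Rightarrow> real^3) \<Rightarrow> complex"

definition photon_space :: "nat \<Rightarrow> (nat \<Rightarrow> real^3) measure" where
  "photon_space m = PiM {..<m} (\<lambda>_. (lborel :: (real^3) measure))"

definition config_measure :: "nat \<Rightarrow> ((real^3) \<times> (nat \<Rightarrow> real^3)) measure" where
  "config_measure m = (lborel :: (real^3) measure) \<Otimes>\<^sub>M photon_space m"

definition labels :: "nat \<Rightarrow> (nat \<Rightarrow> nat) set" where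
  "labels m = PiE {..<m} (\<lambda>_. {1,2::nat})"

definition sector_sum :: "nat \<Rightarrow> (nat \<Rightarrow> (nat \<Rightarrow> nat) \<Rightarrow> real^3 \<Rightarrow> (nat \<Rightarrow> real^3) \<Rightarrow> ennreal) \<Rightarrow> ennreal" where
  "sector_sum m f = (\<Sum>\<sigma>\<in>{1,2::nat}. \<Sum>L\<in>labels m.
      \<integral>\<^sup>+ z. f \<sigma> L (fst z) (snd z) \<partial>config_measure m)"

definition m_photon_state :: "nat \<Rightarrow> state \<Rightarrow> bool" where
  "m_photon_state m \<psi> \<longleftrightarrow>
     (\<forall>\<sigma>\<in>{1,2}. \<forall>L\<in>labels m. (\<lambda>z. \<psi> \<sigma> L (fst z) (snd z)) \<in> borel_measurable (config_measure m)) \<and>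
     (\<forall>\<sigma>\<in>{1,2}. \<forall>L\<in>labels m. \<forall>P. \<forall>K\<in>space (photon_space m). \<forall>\<pi>. \<pi> permutes {..<m} \<longrightarrow>
        \<psi> \<sigma> (restrict (L \<circ> \<pi>) {..<m}) P (restrict (K \<circ> \<pi>) {..<m}) = \<psi> \<sigma> L P K) \<and>
     sector_sum m (\<lambda>\<sigma> L P K. ennreal ((cmod (\<psi> \<sigma> L P K))\<^sup>2)) < \<infinity>"

definition polarization :: "(nat \<Rightarrow> real^3 \<Rightarrow> real^3) \<Rightarrow> bool" where
  "polarization \<epsilon> \<longleftrightarrow>
     (\<forall>l\<in>{1,2}. \<epsilon> l \<in> borel_measurable borel) \<and>
     (\<forall>k. k \<noteq> 0 \<longrightarrow>
        norm (\<epsilon> 1 k) = 1 \<and> norm (\<epsilon> 2 k) = 1 \<and> \<epsilon> 1 k \<bullet> \<epsilon> 2 k = 0 \<and>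
        \<epsilon> 1 k \<bullet> k = 0 \<and> \<epsilon> 2 k \<bullet> k = 0 \<and>
        (\<forall>l\<in>{1,2}. \<epsilon> l (-k) = \<epsilon> l k \<or> \<epsilon> l (-k) = - \<epsilon> l k))"

definition coupling :: "(nat \<Rightarrow> real^3 \<Rightarrow> real^3) \<Rightarrow> real \<Rightarrow> nat \<Rightarrow> real^3 \<Rightarrow> real^3" where
  "coupling \<epsilon> \<Lambda> l k = ((if norm k \<le> \<Lambda> then 1 else 0) / (2 * pi * sqrt (norm k))) *\<^sub>R \<epsilon> l k"

definition del :: "nat \<Rightarrow> nat \<Rightarrow> (nat \<Rightarrow> 'a) \<Rightarrow> (nat \<Rightarrow> 'a)" where
  "del m i f = restrict (\<lambda>j. if j < i then f j else f (Suc j)) {..<m}"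

text \<open>(p . D^* psi) in momentum representation, an (m+1)-photon vector:
  a^* creates a photon with symmetrization factor (m+1)^(-1/2); the factor
  e^(-i k.x) shifts the electron momentum; p acts afterwards.\<close>
definition pD_star :: "(nat \<Rightarrow> real^3 \<Rightarrow> real^3) \<Rightarrow> real \<Rightarrow> nat \<Rightarrow> state \<Rightarrow> state" where
  "pD_star \<epsilon> \<Lambda> m \<psi> \<sigma> L P K =
     (1 / sqrt (real (Suc m))) *
     (\<Sum>i<Suc m. complex_of_real (P \<bullet> coupling \<epsilon> \<Lambda> (L i) (K i)) *
                 \<psi> \<sigma> (del m i L) (P + K i) (del m i K))"

end

theory Submission
  imports Defs
begin

definition hfun :: "real \<Rightarrow> real^3 \<Rightarrow> real" where
  "hfun \<Lambda> k = (if norm k \<le> \<Lambda> then 1 else 0) / (norm k)\<^sup>2"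

lemma hfun_nonneg: "0 \<le> hfun \<Lambda> k"
  by (simp add: hfun_def)

lemma term_bound:
  assumes pol: "polarization \<epsilon>" and l: "l \<in> {1,2}"
  shows "(cmod (complex_of_real (P \<bullet> coupling \<epsilon> \<Lambda> l k) * z))\<^sup>2 / norm k
         \<le> (norm (P + k))\<^sup>2 * hfun \<Lambda> k * (cmod z)\<^sup>2"
proof (cases "k = 0")
  case True then show ?thesis by (simp add: hfun_def)
next
  case False
  define c where "c = (if norm k \<le> \<Lambda> then 1 else 0) / (2 * pi * sqrt (norm k))"
  have g: "coupling \<epsilon> \<Lambda> l k = c *\<^sub>R \<epsilon> l k" by (simp add: coupling_def c_def)
  have e1: "norm (\<epsilon> l k) = 1" and ek: "\<epsilon> l k \<bullet> k = 0"
    using pol False l unfolding polarization_def by auto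
  have "P \<bullet> coupling \<epsilon> \<Lambda> l k = (P + k) \<bullet> coupling \<epsilon> \<Lambda> l k"
    using ek by (simp add: g inner_add_left inner_commute)
  moreover have "\<bar>(P + k) \<bullet> coupling \<epsilon> \<Lambda> l k\<bar> \<le> norm (P + k) * norm (coupling \<epsilon> \<Lambda> l k)"
    by (rule Cauchy_Schwarz_ineq2)
  moreover have "norm (coupling \<epsilon> \<Lambda> l k) = \<bar>c\<bar>" by (simp add: g e1)
  ultimately have "\<bar>P \<bullet> coupling \<epsilon> \<Lambda> l k\<bar> \<le> norm (P + k) * \<bar>c\<bar>" by simp
  then have "(\<bar>P \<bullet> coupling \<epsilon> \<Lambda> l k\<bar>)\<^sup>2 \<le> (norm (P + k) * \<bar>c\<bar>)\<^sup>2"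
    by (rule power_mono) simp
  then have A: "(P \<bullet> coupling \<epsilon> \<Lambda> l k)\<^sup>2 \<le> (norm (P + k))\<^sup>2 * c\<^sup>2"
    by (simp add: power_mult_distrib)
  have nk: "norm k > 0" using False by simp
  have c2: "c\<^sup>2 / norm k = (if norm k \<le> \<Lambda> then 1 else 0) / (4 * pi\<^sup>2 * (norm k)\<^sup>2)"
    using nk by (simp add: c_def power_divide power_mult_distrib power2_eq_square)
  have c3: "c\<^sup>2 / norm k \<le> hfun \<Lambda> k"
  proof -
    have "1 \<le> 4 * pi\<^sup>2" proof -
      have "3 * 3 \<le> pi * pi" using pi_gt3 by (intro mult_mono) auto
      then show ?thesis by (simp add: power2_eq_square)
    qed
    then show ?thesis unfolding c2 hfun_def using nk
      by (auto simp: divide_simps mult_le_cancel_right1)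
  qed
  have "(cmod (complex_of_real (P \<bullet> coupling \<epsilon> \<Lambda> l k) * z))\<^sup>2 / norm k
     = (P \<bullet> coupling \<epsilon> \<Lambda> l k)\<^sup>2 * (cmod z)\<^sup>2 / norm k"
    by (simp add: norm_mult power_mult_distrib)
  also have "\<dots> \<le> (norm (P + k))\<^sup>2 * c\<^sup>2 * (cmod z)\<^sup>2 / norm k"
    using A nk by (intro divide_right_mono mult_right_mono) auto
  also have "\<dots> = (norm (P + k))\<^sup>2 * (c\<^sup>2 / norm k) * (cmod z)\<^sup>2" by simp
  also have "\<dots> \<le> (norm (P + k))\<^sup>2 * hfun \<Lambda> k * (cmod z)\<^sup>2"
    using c3 by (intro mult_right_mono mult_left_mono) auto
  finally show ?thesis .
qed

lemma cs_bound:
  fixes a :: "'i \<Rightarrow> complex" and w :: "'i \<Rightarrow> real"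
  assumes fin: "finite I" and w: "\<And>i. i \<in> I \<Longrightarrow> 0 \<le> w i"
    and z: "\<And>i. i \<in> I \<Longrightarrow> w i = 0 \<Longrightarrow> a i = 0"
    and D: "(\<Sum>i\<in>I. w i) \<le> D"
  shows "(cmod (\<Sum>i\<in>I. a i))\<^sup>2 / D \<le> (\<Sum>i\<in>I. (cmod (a i))\<^sup>2 / w i)"
proof -
  have eq: "(\<Sum>i\<in>I. cmod (a i)) = (\<Sum>i\<in>I. sqrt (w i) * (cmod (a i) / sqrt (w i)))"
  proof (rule sum.cong)
    fix i assume i: "i \<in> I"
    show "cmod (a i) = sqrt (w i) * (cmod (a i) / sqrt (w i))"
    proof (cases "w i = 0")
      case True then show ?thesis using z[OF i] by simp
    next
      case False then have "sqrt (w i) > 0" using w[OF i] by simp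
      then show ?thesis by simp
    qed
  qed simp
  have s1: "(\<Sum>i\<in>I. (sqrt (w i))\<^sup>2) = (\<Sum>i\<in>I. w i)"
    by (rule sum.cong) (auto simp: w)
  have s2: "(\<Sum>i\<in>I. (cmod (a i) / sqrt (w i))\<^sup>2) = (\<Sum>i\<in>I. (cmod (a i))\<^sup>2 / w i)"
    by (rule sum.cong) (auto simp: w power_divide)
  have "(cmod (\<Sum>i\<in>I. a i))\<^sup>2 \<le> (\<Sum>i\<in>I. cmod (a i))\<^sup>2"
    by (rule power_mono[OF norm_sum]) simp
  also have "\<dots> \<le> (\<Sum>i\<in>I. (sqrt (w i))\<^sup>2) * (\<Sum>i\<in>I. (cmod (a i) / sqrt (w i))\<^sup>2)"
    unfolding eq by (rule Cauchy_Schwarz_ineq_sum)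
  finally have X: "(cmod (\<Sum>i\<in>I. a i))\<^sup>2 \<le> (\<Sum>i\<in>I. w i) * (\<Sum>i\<in>I. (cmod (a i))\<^sup>2 / w i)"
    unfolding s1 s2 .
  have S0: "0 \<le> (\<Sum>i\<in>I. (cmod (a i))\<^sup>2 / w i)" using w by (intro sum_nonneg) auto
  show ?thesis
  proof (cases "D > 0")
    case True
    have "(\<Sum>i\<in>I. w i) * (\<Sum>i\<in>I. (cmod (a i))\<^sup>2 / w i) \<le> D * (\<Sum>i\<in>I. (cmod (a i))\<^sup>2 / w i)"
      using D S0 by (intro mult_right_mono) auto
    with X have "(cmod (\<Sum>i\<in>I. a i))\<^sup>2 \<le> (\<Sum>i\<in>I. (cmod (a i))\<^sup>2 / w i) * D"
      by (simp add: mult.commute)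
    with True show ?thesis by (simp add: pos_divide_le_eq)
  next
    case False
    then have "(cmod (\<Sum>i\<in>I. a i))\<^sup>2 / D \<le> 0" by (intro divide_nonneg_nonpos) auto
    then show ?thesis using S0 by linarith
  qed
qed


lemma coupling_zero: "coupling \<epsilon> \<Lambda> l 0 = 0"
  by (simp add: coupling_def)

lemma pointwise:
  assumes pol: "polarization \<epsilon>" and L: "\<And>i. i < Suc m \<Longrightarrow> L i \<in> {1,2}"
  shows "(cmod (pD_star \<epsilon> \<Lambda> m \<psi> \<sigma> L P K))\<^sup>2 / ((norm P)\<^sup>2 + (\<Sum>i<Suc m. norm (K i)))
    \<le> (1 / real (Suc m)) * (\<Sum>i<Suc m. (norm (P + K i))\<^sup>2 * hfun \<Lambda> (K i) *
          (cmod (\<psi> \<sigma> (del m i L) (P + K i) (del m i K)))\<^sup>2)"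
proof -
  define a where "a i = complex_of_real (P \<bullet> coupling \<epsilon> \<Lambda> (L i) (K i)) *
                 \<psi> \<sigma> (del m i L) (P + K i) (del m i K)" for i
  have pd: "pD_star \<epsilon> \<Lambda> m \<psi> \<sigma> L P K = (1 / sqrt (real (Suc m))) * (\<Sum>i<Suc m. a i)"
    by (simp add: pD_star_def a_def)
  have "(cmod (pD_star \<epsilon> \<Lambda> m \<psi> \<sigma> L P K))\<^sup>2 = (1 / real (Suc m)) * (cmod (\<Sum>i<Suc m. a i))\<^sup>2"
    unfolding pd by (simp add: norm_mult norm_divide power_mult_distrib power_divide del: of_nat_Suc sum.lessThan_Suc)
  then have "(cmod (pD_star \<epsilon> \<Lambda> m \<psi> \<sigma> L P K))\<^sup>2 / ((norm P)\<^sup>2 + (\<Sum>i<Suc m. norm (K i)))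
     = (1 / real (Suc m)) * ((cmod (\<Sum>i<Suc m. a i))\<^sup>2 / ((norm P)\<^sup>2 + (\<Sum>i<Suc m. norm (K i))))"
    by simp
  also have "\<dots> \<le> (1 / real (Suc m)) * (\<Sum>i<Suc m. (cmod (a i))\<^sup>2 / norm (K i))"
  proof (intro mult_left_mono cs_bound)
    fix i assume "i \<in> {..<Suc m}" "norm (K i) = 0"
    then show "a i = 0" by (simp add: a_def coupling_zero)
  qed auto
  also have "\<dots> \<le> (1 / real (Suc m)) * (\<Sum>i<Suc m. (norm (P + K i))\<^sup>2 * hfun \<Lambda> (K i) *
          (cmod (\<psi> \<sigma> (del m i L) (P + K i) (del m i K)))\<^sup>2)"
    unfolding a_def by (intro mult_left_mono sum_mono term_bound[OF pol] L) auto
  finally show ?thesis .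
qed


definition ins :: "nat \<Rightarrow> nat \<Rightarrow> 'a \<Rightarrow> (nat \<Rightarrow> 'a) \<Rightarrow> (nat \<Rightarrow> 'a)" where
  "ins m i a f = (\<lambda>j\<in>{..<Suc m}. if j < i then f j else if j = i then a else f (j - 1))"

lemma del_ins: "i \<le> m \<Longrightarrow> del m i (ins m i a f) = restrict f {..<m}"
  by (auto simp: del_def ins_def fun_eq_iff)

lemma ins_del: "i \<le> m \<Longrightarrow> ins m i (g i) (del m i g) = restrict g {..<Suc m}"
  by (auto simp: del_def ins_def fun_eq_iff)

lemma ins_at: "i \<le> m \<Longrightarrow> ins m i a f i = a"
  by (auto simp: ins_def)

lemma ins_PiE: "i \<le> m \<Longrightarrow> a \<in> S \<Longrightarrow> f \<in> PiE {..<m} (\<lambda>_. S) \<Longrightarrow> ins m i a f \<in> PiE {..<Suc m} (\<lambda>_. S)"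
  by (auto simp: ins_def PiE_def Pi_def)

lemma del_PiE: "g \<in> PiE {..<Suc m} (\<lambda>_. S) \<Longrightarrow> del m i g \<in> PiE {..<m} (\<lambda>_. S)"
  by (auto simp: del_def PiE_def Pi_def)

lemma bij_ins:
  assumes im: "i \<le> m"
  shows "bij_betw (\<lambda>(a,f). ins m i a f) (S \<times> PiE {..<m} (\<lambda>_. S)) (PiE {..<Suc m} (\<lambda>_. S))"
proof (rule bij_betw_byWitness[where f' = "\<lambda>g. (g i, del m i g)"])
  show "\<forall>x\<in>S \<times> PiE {..<m} (\<lambda>_. S). (\<lambda>g. (g i, del m i g)) ((\<lambda>(a,f). ins m i a f) x) = x"
  proof
    fix x assume x: "x \<in> S \<times> PiE {..<m} (\<lambda>_. S)"
    obtain a f where xa: "x = (a, f)" by (cases x)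
    have "f \<in> PiE {..<m} (\<lambda>_. S)" using x xa by simp
    then have "restrict f {..<m} = f" by (rule PiE_restrict)
    then show "(\<lambda>g. (g i, del m i g)) ((\<lambda>(a,f). ins m i a f) x) = x"
      using xa im by (simp add: ins_at del_ins)
  qed
  show "\<forall>y\<in>PiE {..<Suc m} (\<lambda>_. S). (\<lambda>(a,f). ins m i a f) ((\<lambda>g. (g i, del m i g)) y) = y"
  proof
    fix y assume y: "y \<in> PiE {..<Suc m} (\<lambda>_. S)"
    have "restrict y {..<Suc m} = y" using y by (simp add: PiE_restrict)
    then show "(\<lambda>(a,f). ins m i a f) ((\<lambda>g. (g i, del m i g)) y) = y"
      using im by (simp add: ins_del)
  qed
  show "(\<lambda>(a,f). ins m i a f) ` (S \<times> PiE {..<m} (\<lambda>_. S)) \<subseteq> PiE {..<Suc m} (\<lambda>_. S)"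
  proof
    fix y assume "y \<in> (\<lambda>(a,f). ins m i a f) ` (S \<times> PiE {..<m} (\<lambda>_. S))"
    then obtain x where x: "x \<in> S \<times> PiE {..<m} (\<lambda>_. S)" and yx: "y = (\<lambda>(a,f). ins m i a f) x"
      by (rule imageE)
    obtain a f where xa: "x = (a, f)" by (cases x)
    have "a \<in> S" "f \<in> PiE {..<m} (\<lambda>_. S)" using x xa by auto
    then show "y \<in> PiE {..<Suc m} (\<lambda>_. S)" using yx xa ins_PiE[OF im] by simp
  qed
  show "(\<lambda>g. (g i, del m i g)) ` PiE {..<Suc m} (\<lambda>_. S) \<subseteq> S \<times> PiE {..<m} (\<lambda>_. S)"
  proof
    fix y assume "y \<in> (\<lambda>g. (g i, del m i g)) ` PiE {..<Suc m} (\<lambda>_. S)"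
    then obtain g where g1: "g \<in> PiE {..<Suc m} (\<lambda>_. S)" and g2: "y = (g i, del m i g)"
      by (rule imageE)
    have "i \<in> {..<Suc m}" using im by simp
    with g1 have "g i \<in> S" by (rule PiE_mem)
    then show "y \<in> S \<times> PiE {..<m} (\<lambda>_. S)" using g1 g2 del_PiE by simp
  qed
qed

lemma labels_sum:
  fixes F :: "(nat \<Rightarrow> nat) \<Rightarrow> 'b::comm_semiring_1"
  assumes im: "i \<le> m"
  shows "(\<Sum>L\<in>labels (Suc m). F (del m i L)) = 2 * (\<Sum>L\<in>labels m. F L)"
proof -
  have "(\<Sum>L\<in>labels (Suc m). F (del m i L)) = (\<Sum>x\<in>{1,2::nat} \<times> labels m. F (del m i ((\<lambda>(a,f). ins m i a f) x)))"
    unfolding labels_def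
    by (rule sum.reindex_bij_betw[OF bij_ins[OF im], symmetric])
  also have "\<dots> = (\<Sum>x\<in>{1,2::nat} \<times> labels m. F (snd x))"
  proof (rule sum.cong)
    fix x assume x: "x \<in> {1,2::nat} \<times> labels m"
    obtain a f where xa: "x = (a, f)" by (cases x)
    have "f \<in> labels m" using x xa by simp
    then have "restrict f {..<m} = f" unfolding labels_def by (rule PiE_restrict)
    then show "F (del m i ((\<lambda>(a,f). ins m i a f) x)) = F (snd x)"
      using xa im by (simp add: del_ins)
  qed simp
  also have "\<dots> = (\<Sum>a\<in>{1,2::nat}. \<Sum>L\<in>labels m. F L)"
    by (simp add: sum.cartesian_product' case_prod_beta)
  also have "\<dots> = 2 * (\<Sum>L\<in>labels m. F L)" by simp
  finally show ?thesis .
qed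

definition Ff :: "real \<Rightarrow> real \<Rightarrow> ennreal" where
  "Ff \<Lambda> t = (if t = 0 then top else ennreal (if \<bar>t\<bar> \<le> \<Lambda> then \<bar>t\<bar> powr (-2/3) else 0))"

lemma Ff_meas[measurable]: "Ff \<Lambda> \<in> borel_measurable borel"
  unfolding Ff_def by measurable

lemma cube_pow: "0 < (x::real) \<Longrightarrow> (x powr (-2/3)) ^ 3 = 1 / x\<^sup>2"
proof -
  assume x: "0 < x"
  have "(x powr (-2/3)) ^ 3 = (x powr (-2/3)) powr (real 3)"
    using x by (subst powr_realpow) auto
  also have "\<dots> = x powr (-2)" by (simp only: powr_powr) simp
  also have "\<dots> = 1 / x\<^sup>2" using powr_neg_numeral[OF x, of "num.Bit0 num.One"] by simp
  finally show ?thesis .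
qed

lemma card_Basis3: "card (Basis :: (real^3) set) = 3"
  by simp

lemma hfun_le_prod: "ennreal (hfun \<Lambda> k) \<le> (\<Prod>b\<in>Basis. Ff \<Lambda> (k \<bullet> b))"
proof (cases "k = 0 \<or> norm k > \<Lambda>")
  case True then show ?thesis by (auto simp: hfun_def)
next
  case False
  then have k0: "k \<noteq> 0" and kL: "norm k \<le> \<Lambda>" by auto
  have nk: "norm k > 0" using k0 by simp
  have bnd: "\<bar>k \<bullet> b\<bar> \<le> \<Lambda>" if "b \<in> Basis" for b
    using Basis_le_norm[OF that, of k] kL by simp
  show ?thesis
  proof (cases "\<exists>b\<in>Basis. k \<bullet> b = 0")
    case True
    have "(\<Prod>b\<in>Basis. Ff \<Lambda> (k \<bullet> b)) = top"
      unfolding ennreal_prod_eq_top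
    proof (intro conjI ballI)
      show "finite (Basis :: (real^3) set)" by simp
      show "\<exists>b\<in>Basis. Ff \<Lambda> (k \<bullet> b) = top" using True by (auto simp: Ff_def)
    next
      fix b :: "real^3" assume b: "b \<in> Basis"
      show "Ff \<Lambda> (k \<bullet> b) \<noteq> 0"
        using bnd[OF b] by (auto simp: Ff_def)
    qed
    then show ?thesis by simp
  next
    case False
    have "(\<Prod>b\<in>Basis. Ff \<Lambda> (k \<bullet> b)) = (\<Prod>b\<in>Basis. ennreal (\<bar>k \<bullet> b\<bar> powr (-2/3)))"
      using False bnd by (intro prod.cong) (auto simp: Ff_def)
    also have "\<dots> = ennreal (\<Prod>b\<in>Basis. \<bar>k \<bullet> b\<bar> powr (-2/3))"
      by (rule prod_ennreal) simp
    finally have eq: "(\<Prod>b\<in>Basis. Ff \<Lambda> (k \<bullet> b)) = ennreal (\<Prod>b\<in>Basis. \<bar>k \<bullet> b\<bar> powr (-2/3))" .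
    have "(\<Prod>b\<in>(Basis::(real^3) set). norm k powr (-2/3)) \<le> (\<Prod>b\<in>Basis. \<bar>k \<bullet> b\<bar> powr (-2/3))"
    proof (rule prod_mono)
      fix b :: "real^3" assume b: "b \<in> Basis"
      have "\<bar>k \<bullet> b\<bar> > 0" using False b by auto
      then show "0 \<le> norm k powr (-2/3) \<and> norm k powr (-2/3) \<le> \<bar>k \<bullet> b\<bar> powr (-2/3)"
        using Basis_le_norm[OF b, of k] by (auto intro: powr_mono2')
    qed
    moreover have "(\<Prod>b\<in>(Basis::(real^3) set). norm k powr (-2/3)) = (norm k powr (-2/3)) ^ 3"
      by simp
    moreover have "(norm k powr (-2/3)) ^ 3 = 1 / (norm k)\<^sup>2"
      by (rule cube_pow[OF nk])
    ultimately have "hfun \<Lambda> k \<le> (\<Prod>b\<in>Basis. \<bar>k \<bullet> b\<bar> powr (-2/3))"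
      using kL by (simp add: hfun_def)
    then show ?thesis unfolding eq by (rule ennreal_leI)
  qed
qed

lemma nn_integral_lborel_prod_ennreal:
  fixes f :: "real^3 \<Rightarrow> real \<Rightarrow> ennreal"
  assumes [measurable]: "\<And>b. b \<in> Basis \<Longrightarrow> f b \<in> borel_measurable borel"
  shows "(\<integral>\<^sup>+x. (\<Prod>b\<in>Basis. f b (x \<bullet> b)) \<partial>lborel) = (\<Prod>b\<in>Basis. (\<integral>\<^sup>+x. f b x \<partial>lborel))"
proof -
  interpret P: product_sigma_finite "\<lambda>_::real^3. (lborel::real measure)"
    by (simp add: product_sigma_finite_def lborel.sigma_finite_measure_axioms)
  have eq: "(lborel :: (real^3) measure) = distr (\<Pi>\<^sub>M b\<in>Basis. lborel) borel (\<lambda>f. \<Sum>b\<in>Basis. f b *\<^sub>R b)"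
    by (rule lborel_eq)
  have inn: "(\<Sum>b'\<in>Basis. y b' *\<^sub>R b') \<bullet> b = y b" if "b \<in> (Basis :: (real^3) set)" for y :: "real^3 \<Rightarrow> real" and b
  proof -
    have "(\<Sum>b'\<in>Basis. y b' *\<^sub>R b') \<bullet> b = (\<Sum>b'\<in>Basis. (y b' *\<^sub>R b') \<bullet> b)"
      by (rule inner_sum_left)
    also have "\<dots> = (\<Sum>b'\<in>Basis. if b' = b then y b' else 0)"
      by (rule sum.cong[OF refl]) (simp add: inner_Basis that)
    also have "\<dots> = y b" using that by simp
    finally show ?thesis .
  qed
  have "(\<integral>\<^sup>+x. (\<Prod>b\<in>Basis. f b (x \<bullet> b)) \<partial>lborel) =
        (\<integral>\<^sup>+y. (\<Prod>b\<in>Basis. f b ((\<Sum>b'\<in>Basis. y b' *\<^sub>R b') \<bullet> b)) \<partial>(\<Pi>\<^sub>M b\<in>Basis. lborel))"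
    unfolding eq
    apply (rule nn_integral_distr)
     apply measurable
    done
  also have "\<dots> = (\<integral>\<^sup>+y. (\<Prod>b\<in>Basis. f b (y b)) \<partial>(\<Pi>\<^sub>M b\<in>Basis. lborel))"
    by (rule nn_integral_cong, rule prod.cong[OF refl], simp only: inn)
  also have "\<dots> = (\<Prod>b\<in>Basis. (\<integral>\<^sup>+x. f b x \<partial>lborel))"
    by (rule P.product_nn_integral_prod) auto
  finally show ?thesis .
qed

lemma int_Ff: assumes L: "\<Lambda> > 0" shows "(\<integral>\<^sup>+t. Ff \<Lambda> t \<partial>lborel) \<le> ennreal (6 * \<Lambda> powr (1/3))"
proof -
  define G where "G t = ennreal (t powr (-2/3)) * indicator {0..\<Lambda>} t" for t :: real
  have Gm[measurable]: "G \<in> borel_measurable borel" unfolding G_def by measurable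
  have IG: "(\<integral>\<^sup>+t. G t \<partial>lborel) = ennreal (\<Lambda> powr (1/3) / (1/3))"
    unfolding G_def
    using nn_integral_has_integral_lebesgue'[OF _ has_integral_powr_from_0[of "-2/3" \<Lambda>]] L
    by simp
  have IG2: "(\<integral>\<^sup>+t. G (- t) \<partial>lborel) = (\<integral>\<^sup>+t. G t \<partial>lborel)"
    using nn_integral_real_affine[OF Gm, of "-1" 0] by simp
  have "(\<integral>\<^sup>+t. Ff \<Lambda> t \<partial>lborel) \<le> (\<integral>\<^sup>+t. G t + G (- t) \<partial>lborel)"
  proof (rule nn_integral_mono_AE)
    show "AE t in lborel. Ff \<Lambda> t \<le> G t + G (- t)"
      using AE_lborel_singleton[of 0]
    proof eventually_elim
      case (elim t)
      show ?case
      proof (cases "t > 0")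
        case True then show ?thesis by (auto simp: Ff_def G_def indicator_def)
      next
        case False then have "t < 0" using elim by simp
        then show ?thesis by (auto simp: Ff_def G_def indicator_def)
      qed
    qed
  qed
  also have "\<dots> = (\<integral>\<^sup>+t. G t \<partial>lborel) + (\<integral>\<^sup>+t. G (- t) \<partial>lborel)"
    by (rule nn_integral_add) auto
  also have "\<dots> = ennreal (6 * \<Lambda> powr (1/3))"
    unfolding IG2 IG using L by (simp add: ennreal_plus[symmetric] del: ennreal_plus)
  finally show ?thesis .
qed

lemma int_hfun: assumes L: "\<Lambda> > 0" shows "(\<integral>\<^sup>+k. ennreal (hfun \<Lambda> k) \<partial>lborel) \<le> ennreal (216 * \<Lambda>)"
proof -
  have "(\<integral>\<^sup>+k. ennreal (hfun \<Lambda> k) \<partial>lborel) \<le> (\<integral>\<^sup>+k. (\<Prod>b\<in>Basis. Ff \<Lambda> ((k::real^3) \<bullet> b)) \<partial>lborel)"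
    by (rule nn_integral_mono) (rule hfun_le_prod)
  also have "\<dots> = (\<Prod>b\<in>(Basis::(real^3) set). (\<integral>\<^sup>+t. Ff \<Lambda> t \<partial>lborel))"
    by (rule nn_integral_lborel_prod_ennreal) simp
  also have "\<dots> = (\<integral>\<^sup>+t. Ff \<Lambda> t \<partial>lborel) ^ 3" by simp
  also have "\<dots> \<le> (ennreal (6 * \<Lambda> powr (1/3))) ^ 3"
    by (intro power_mono int_Ff L) simp
  also have "\<dots> = ennreal ((6 * \<Lambda> powr (1/3)) ^ 3)" using L by (simp add: ennreal_power)
  also have "(6 * \<Lambda> powr (1/3)) ^ 3 = 216 * \<Lambda>"
  proof -
    have "(\<Lambda> powr (1/3)) ^ 3 = (\<Lambda> powr (1/3)) powr (real 3)"
      using L by (subst powr_realpow) auto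
    also have "\<dots> = \<Lambda>" using L by (simp only: powr_powr) simp
    finally show ?thesis by (simp add: power_mult_distrib)
  qed
  finally show ?thesis .
qed

interpretation PS: product_sigma_finite "\<lambda>_::nat. (lborel :: (real^3) measure)"
  by (simp add: product_sigma_finite_def lborel.sigma_finite_measure_axioms)

lemma sf_photon: "sigma_finite_measure (photon_space m)"
  unfolding photon_space_def by (rule PS.sigma_finite) simp

lemma space_photon: "space (photon_space m) = PiE {..<m} (\<lambda>_. UNIV)"
  by (simp add: photon_space_def space_PiM)

lemma del_meas[measurable]: "del m i \<in> measurable (photon_space (Suc m)) (photon_space m)"
  unfolding del_def photon_space_def
proof (rule measurable_restrict)
  fix j assume j: "j \<in> {..<m}"
  show "(\<lambda>x. if j < i then x j else x (Suc j)) \<in> measurable (Pi\<^sub>M {..<Suc m} (\<lambda>_. lborel)) lborel"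
  proof (cases "j < i")
    case True then show ?thesis using j by (simp add: measurable_component_singleton)
  next
    case False then show ?thesis using j by (simp add: measurable_component_singleton)
  qed
qed

lemma ins_meas[measurable]:
  assumes im: "i \<le> m"
  shows "(\<lambda>z. ins m i (fst z) (snd z)) \<in> measurable (lborel \<Otimes>\<^sub>M photon_space m) (photon_space (Suc m))"
  unfolding ins_def photon_space_def
proof (rule measurable_restrict)
  fix j assume j: "j \<in> {..<Suc m}"
  show "(\<lambda>z. if j < i then snd z j else if j = i then fst z else snd z (j - 1))
        \<in> measurable (lborel \<Otimes>\<^sub>M Pi\<^sub>M {..<m} (\<lambda>_. lborel)) lborel"
  proof (cases "j < i")
    case True
    then have "j \<in> {..<m}" using im by simp
    then show ?thesis using True
      by (simp add: measurable_compose[OF measurable_snd measurable_component_singleton])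
  next
    case False
    show ?thesis
    proof (cases "j = i")
      case True then show ?thesis by simp
    next
      case F2: False
      then have "j - 1 \<in> {..<m}" using False j by auto
      then show ?thesis using False F2
        by (simp add: measurable_compose[OF measurable_snd measurable_component_singleton])
    qed
  qed
qed

lemma distr_ins:
  assumes im: "i \<le> m"
  shows "distr (lborel \<Otimes>\<^sub>M photon_space m) (photon_space (Suc m)) (\<lambda>z. ins m i (fst z) (snd z))
         = photon_space (Suc m)"
  unfolding photon_space_def
proof (rule PS.PiM_eqI)
  show "finite {..<Suc m}" by simp
  show "sets (distr (lborel \<Otimes>\<^sub>M Pi\<^sub>M {..<m} (\<lambda>_. lborel)) (Pi\<^sub>M {..<Suc m} (\<lambda>_. lborel))
     (\<lambda>z. ins m i (fst z) (snd z))) = sets (Pi\<^sub>M {..<Suc m} (\<lambda>_. lborel))" by simp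
  fix A assume A: "\<And>j. j \<in> {..<Suc m} \<Longrightarrow> A j \<in> sets (lborel :: (real^3) measure)"
  define sh where "sh j = (if j < i then j else Suc j)" for j
  have shm: "sh j \<in> {..<Suc m}" if "j < m" for j using that by (simp add: sh_def)
  have pre: "(\<lambda>z. ins m i (fst z) (snd z)) -` PiE {..<Suc m} A \<inter> space (lborel \<Otimes>\<^sub>M Pi\<^sub>M {..<m} (\<lambda>_. lborel))
        = A i \<times> PiE {..<m} (\<lambda>j. A (sh j))"
  proof (intro set_eqI iffI)
    fix z assume z: "z \<in> (\<lambda>z. ins m i (fst z) (snd z)) -` PiE {..<Suc m} A \<inter> space (lborel \<Otimes>\<^sub>M Pi\<^sub>M {..<m} (\<lambda>_. lborel))"
    obtain k K where zk: "z = (k, K)" by (cases z)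
    have K: "K \<in> PiE {..<m} (\<lambda>_. UNIV)" using z zk by (simp add: space_pair_measure space_PiM)
    have I: "ins m i k K \<in> PiE {..<Suc m} A" using z zk by simp
    have "k \<in> A i" using PiE_mem[OF I, of i] im by (simp add: ins_at)
    moreover have "K \<in> PiE {..<m} (\<lambda>j. A (sh j))"
    proof (rule PiE_I)
      fix j assume j: "j \<in> {..<m}"
      have "ins m i k K (sh j) \<in> A (sh j)" using PiE_mem[OF I shm] j by simp
      moreover have "ins m i k K (sh j) = K j" using j im by (auto simp: ins_def sh_def)
      ultimately show "K j \<in> A (sh j)" by simp
    next
      fix j assume "j \<notin> {..<m}" then show "K j = undefined" using K by (auto simp: PiE_def extensional_def)
    qed
    ultimately show "z \<in> A i \<times> PiE {..<m} (\<lambda>j. A (sh j))" using zk by simp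
  next
    fix z assume z: "z \<in> A i \<times> PiE {..<m} (\<lambda>j. A (sh j))"
    obtain k K where zk: "z = (k, K)" by (cases z)
    have k: "k \<in> A i" and K: "K \<in> PiE {..<m} (\<lambda>j. A (sh j))" using z zk by auto
    have "ins m i k K \<in> PiE {..<Suc m} A"
    proof (rule PiE_I)
      fix j assume j: "j \<in> {..<Suc m}"
      show "ins m i k K j \<in> A j"
      proof (cases "j < i")
        case True
        then have "j < m" using im by simp
        then have "K j \<in> A (sh j)" using K by auto
        then show ?thesis using True j by (simp add: ins_def sh_def)
      next
        case False
        show ?thesis
        proof (cases "j = i")
          case True then show ?thesis using k j by (simp add: ins_def)
        next
          case F2: False
          then have "j - 1 < m" "sh (j - 1) = j" using False j by (auto simp: sh_def)
          then have "K (j - 1) \<in> A j" using K by (metis PiE_mem lessThan_iff)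
          then show ?thesis using False F2 j by (simp add: ins_def)
        qed
      qed
    next
      fix j assume "j \<notin> {..<Suc m}" then show "ins m i k K j = undefined" by (simp add: ins_def)
    qed
    moreover have "K \<in> PiE {..<m} (\<lambda>_. UNIV)" using K by (auto simp: PiE_def)
    ultimately show "z \<in> (\<lambda>z. ins m i (fst z) (snd z)) -` PiE {..<Suc m} A \<inter> space (lborel \<Otimes>\<^sub>M Pi\<^sub>M {..<m} (\<lambda>_. lborel))"
      using zk by (simp add: space_pair_measure space_PiM)
  qed
  have Ai: "A i \<in> sets lborel" using A im by simp
  have Ash: "PiE {..<m} (\<lambda>j. A (sh j)) \<in> sets (Pi\<^sub>M {..<m} (\<lambda>_. lborel :: (real^3) measure))"
    using A shm by (intro sets_PiM_I_finite) auto
  have "emeasure (distr (lborel \<Otimes>\<^sub>M Pi\<^sub>M {..<m} (\<lambda>_. lborel)) (Pi\<^sub>M {..<Suc m} (\<lambda>_. lborel))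
     (\<lambda>z. ins m i (fst z) (snd z))) (PiE {..<Suc m} A)
     = emeasure (lborel \<Otimes>\<^sub>M Pi\<^sub>M {..<m} (\<lambda>_. lborel)) (A i \<times> PiE {..<m} (\<lambda>j. A (sh j)))"
    using A ins_meas[OF im] unfolding pre[symmetric] photon_space_def
    by (intro emeasure_distr) (auto intro: sets_PiM_I_finite)
  also have "\<dots> = emeasure lborel (A i) * emeasure (Pi\<^sub>M {..<m} (\<lambda>_. lborel)) (PiE {..<m} (\<lambda>j. A (sh j)))"
    using sf_photon[of m] Ai Ash unfolding photon_space_def
    by (intro sigma_finite_measure.emeasure_pair_measure_Times)
  also have "emeasure (Pi\<^sub>M {..<m} (\<lambda>_. lborel)) (PiE {..<m} (\<lambda>j. A (sh j))) = (\<Prod>j<m. emeasure lborel (A (sh j)))"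
    using A shm by (intro PS.emeasure_PiM) auto
  also have "emeasure lborel (A i) * (\<Prod>j<m. emeasure lborel (A (sh j))) = (\<Prod>j<Suc m. emeasure lborel (A j))"
  proof -
    have inj: "inj_on sh {..<m}" by (auto simp: inj_on_def sh_def split: if_splits)
    have img: "{..<Suc m} = insert i (sh ` {..<m})"
    proof (intro set_eqI iffI)
      fix j assume j: "j \<in> {..<Suc m}"
      show "j \<in> insert i (sh ` {..<m})"
      proof (cases "j < i")
        case True then have "sh j = j" "j < m" using im by (auto simp: sh_def)
        then show ?thesis by (metis imageI insertI2 lessThan_iff)
      next
        case False
        show ?thesis
        proof (cases "j = i")
          case True then show ?thesis by simp
        next
          case F2: False
          then have "sh (j - 1) = j" "j - 1 < m" using False j by (auto simp: sh_def)
          then show ?thesis by (metis imageI insertI2 lessThan_iff)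
        qed
      qed
    next
      fix j assume "j \<in> insert i (sh ` {..<m})"
      then show "j \<in> {..<Suc m}" using im shm by auto
    qed
    have ni: "i \<notin> sh ` {..<m}" by (auto simp: sh_def)
    have "(\<Prod>j<Suc m. emeasure lborel (A j)) = emeasure lborel (A i) * (\<Prod>j\<in>sh ` {..<m}. emeasure lborel (A j))"
      unfolding img by (rule prod.insert) (use ni in auto)
    also have "(\<Prod>j\<in>sh ` {..<m}. emeasure lborel (A j)) = (\<Prod>j<m. emeasure lborel (A (sh j)))"
      by (rule prod.reindex[OF inj, unfolded comp_def])
    finally show ?thesis by simp
  qed
  finally show "emeasure (distr (lborel \<Otimes>\<^sub>M Pi\<^sub>M {..<m} (\<lambda>_. lborel)) (Pi\<^sub>M {..<Suc m} (\<lambda>_. lborel))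
     (\<lambda>z. ins m i (fst z) (snd z))) (PiE {..<Suc m} A) = (\<Prod>j\<in>{..<Suc m}. emeasure lborel (A j))" .
qed

lemma hfun_meas[measurable]: "hfun \<Lambda> \<in> borel_measurable borel"
  unfolding hfun_def by measurable

lemma photon_nn_meas[measurable (raw)]:
  "case_prod f \<in> borel_measurable (N \<Otimes>\<^sub>M photon_space m) \<Longrightarrow> (\<lambda>x. \<integral>\<^sup>+y. f x y \<partial>photon_space m) \<in> borel_measurable N"
  by (rule sigma_finite_measure.borel_measurable_nn_integral[OF sf_photon])

lemma int_term:
  fixes G :: "(real^3) \<times> (nat \<Rightarrow> real^3) \<Rightarrow> real"
  assumes im: "i \<le> m" and Gm[measurable]: "G \<in> borel_measurable (lborel \<Otimes>\<^sub>M photon_space m)"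
    and G0: "\<And>z. 0 \<le> G z"
  shows "(\<integral>\<^sup>+z. ennreal ((norm (fst z + snd z i))\<^sup>2 * hfun \<Lambda> (snd z i) * G (fst z + snd z i, del m i (snd z))) \<partial>config_measure (Suc m))
       = (\<integral>\<^sup>+k. ennreal (hfun \<Lambda> k) \<partial>lborel) * (\<integral>\<^sup>+z. ennreal ((norm (fst z))\<^sup>2 * G z) \<partial>config_measure m)"
proof -
  interpret S1: sigma_finite_measure "photon_space (Suc m)" by (rule sf_photon)
  have ci[measurable]: "(\<lambda>K. K i) \<in> borel_measurable (photon_space (Suc m))"
  proof -
    have "(\<lambda>K. K i) \<in> measurable (photon_space (Suc m)) lborel"
      unfolding photon_space_def using im by (intro measurable_component_singleton) simp
    then show ?thesis by (simp add: measurable_lborel2)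
  qed
  interpret S0: sigma_finite_measure "photon_space m" by (rule sf_photon)
  define g where "g P k K' = ennreal ((norm (P + k))\<^sup>2 * hfun \<Lambda> k * G (P + k, K'))" for P k K'
  define \<Psi> where "\<Psi> P = (\<integral>\<^sup>+K'. ennreal ((norm P)\<^sup>2 * G (P, K')) \<partial>photon_space m)" for P
  have gm[measurable]: "(\<lambda>x. g (fst x) (fst (snd x)) (snd (snd x))) \<in> borel_measurable (lborel \<Otimes>\<^sub>M (lborel \<Otimes>\<^sub>M photon_space m))"
    unfolding g_def by measurable
  have \<Psi>m[measurable]: "\<Psi> \<in> borel_measurable lborel"
    unfolding \<Psi>_def by measurable
  have "(\<integral>\<^sup>+z. ennreal ((norm (fst z + snd z i))\<^sup>2 * hfun \<Lambda> (snd z i) * G (fst z + snd z i, del m i (snd z))) \<partial>config_measure (Suc m))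
      = (\<integral>\<^sup>+P. \<integral>\<^sup>+K. g P (K i) (del m i K) \<partial>photon_space (Suc m) \<partial>lborel)"
  proof -
    have mf: "(\<lambda>z. ennreal ((norm (fst z + snd z i))\<^sup>2 * hfun \<Lambda> (snd z i) * G (fst z + snd z i, del m i (snd z))))
       \<in> borel_measurable (lborel \<Otimes>\<^sub>M photon_space (Suc m))"
      by measurable
    show ?thesis unfolding config_measure_def g_def using S1.nn_integral_fst[OF mf] by simp
  qed
  also have "\<dots> = (\<integral>\<^sup>+P. \<integral>\<^sup>+y. g P (fst y) (snd y) \<partial>(lborel \<Otimes>\<^sub>M photon_space m) \<partial>lborel)"
  proof (rule nn_integral_cong)
    fix P :: "real^3"
    have "(\<integral>\<^sup>+K. g P (K i) (del m i K) \<partial>photon_space (Suc m))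
        = (\<integral>\<^sup>+K. g P (K i) (del m i K) \<partial>distr (lborel \<Otimes>\<^sub>M photon_space m) (photon_space (Suc m)) (\<lambda>z. ins m i (fst z) (snd z)))"
      by (simp only: distr_ins[OF im])
    also have "\<dots> = (\<integral>\<^sup>+y. g P (ins m i (fst y) (snd y) i) (del m i (ins m i (fst y) (snd y))) \<partial>(lborel \<Otimes>\<^sub>M photon_space m))"
      apply (rule nn_integral_distr)
       apply (rule ins_meas[OF im])
      apply (simp only: distr_ins[OF im] g_def)
      apply measurable
      done
    also have "\<dots> = (\<integral>\<^sup>+y. g P (fst y) (snd y) \<partial>(lborel \<Otimes>\<^sub>M photon_space m))"
    proof (rule nn_integral_cong)
      fix y :: "(real^3) \<times> (nat \<Rightarrow> real^3)" assume y: "y \<in> space (lborel \<Otimes>\<^sub>M photon_space m)"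
      then have "snd y \<in> PiE {..<m} (\<lambda>_. UNIV)" by (auto simp: space_pair_measure space_photon)
      then have "restrict (snd y) {..<m} = snd y" by (rule PiE_restrict)
      then show "g P (ins m i (fst y) (snd y) i) (del m i (ins m i (fst y) (snd y))) = g P (fst y) (snd y)"
        using im by (simp add: ins_at del_ins)
    qed
    finally show "(\<integral>\<^sup>+K. g P (K i) (del m i K) \<partial>photon_space (Suc m)) = (\<integral>\<^sup>+y. g P (fst y) (snd y) \<partial>(lborel \<Otimes>\<^sub>M photon_space m))" .
  qed
  also have "\<dots> = (\<integral>\<^sup>+P. \<integral>\<^sup>+k. \<integral>\<^sup>+K'. g P k K' \<partial>photon_space m \<partial>lborel \<partial>lborel)"
  proof (rule nn_integral_cong)
    fix P :: "real^3"
    show "(\<integral>\<^sup>+y. g P (fst y) (snd y) \<partial>(lborel \<Otimes>\<^sub>M photon_space m)) = (\<integral>\<^sup>+k. \<integral>\<^sup>+K'. g P k K' \<partial>photon_space m \<partial>lborel)"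
    proof -
      have "(\<lambda>y. g P (fst y) (snd y)) \<in> borel_measurable (lborel \<Otimes>\<^sub>M photon_space m)"
        unfolding g_def by measurable
      from S0.nn_integral_fst[OF this] show ?thesis by simp
    qed
  qed
  also have "\<dots> = (\<integral>\<^sup>+k. \<integral>\<^sup>+P. \<integral>\<^sup>+K'. g P k K' \<partial>photon_space m \<partial>lborel \<partial>lborel)"
    by (rule lborel_pair.Fubini'[symmetric]) (unfold g_def, measurable)
  also have "\<dots> = (\<integral>\<^sup>+k. ennreal (hfun \<Lambda> k) * (\<integral>\<^sup>+P. \<Psi> P \<partial>lborel) \<partial>lborel)"
  proof (rule nn_integral_cong)
    fix k :: "real^3"
    have tr: "(\<integral>\<^sup>+P. \<Psi> (P + k) \<partial>lborel) = (\<integral>\<^sup>+P. \<Psi> P \<partial>lborel)"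
    proof -
      have "(\<integral>\<^sup>+P. \<Psi> P \<partial>lborel) = (\<integral>\<^sup>+P. \<Psi> P \<partial>distr lborel borel ((+) k))"
        by (simp only: lborel_distr_plus)
      also have "\<dots> = (\<integral>\<^sup>+P. \<Psi> (k + P) \<partial>lborel)"
      proof (rule nn_integral_distr)
        show "(+) k \<in> measurable lborel (borel :: (real^3) measure)" by simp
        show "\<Psi> \<in> borel_measurable (distr lborel borel ((+) k))"
          by (simp only: lborel_distr_plus \<Psi>m)
      qed
      finally show ?thesis by (simp add: add.commute)
    qed
    have "(\<integral>\<^sup>+P. \<integral>\<^sup>+K'. g P k K' \<partial>photon_space m \<partial>lborel)
        = (\<integral>\<^sup>+P. ennreal (hfun \<Lambda> k) * \<Psi> (P + k) \<partial>lborel)"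
    proof (rule nn_integral_cong)
      fix P :: "real^3"
      have "(\<integral>\<^sup>+K'. g P k K' \<partial>photon_space m)
          = (\<integral>\<^sup>+K'. ennreal (hfun \<Lambda> k) * ennreal ((norm (P + k))\<^sup>2 * G (P + k, K')) \<partial>photon_space m)"
        unfolding g_def
        by (intro nn_integral_cong) (simp add: ennreal_mult'[symmetric] hfun_nonneg G0 mult_ac)
      also have "\<dots> = ennreal (hfun \<Lambda> k) * \<Psi> (P + k)"
        unfolding \<Psi>_def by (rule nn_integral_cmult) measurable
      finally show "(\<integral>\<^sup>+K'. g P k K' \<partial>photon_space m) = ennreal (hfun \<Lambda> k) * \<Psi> (P + k)" .
    qed
    also have "\<dots> = ennreal (hfun \<Lambda> k) * (\<integral>\<^sup>+P. \<Psi> (P + k) \<partial>lborel)"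
      by (rule nn_integral_cmult) measurable
    also have "\<dots> = ennreal (hfun \<Lambda> k) * (\<integral>\<^sup>+P. \<Psi> P \<partial>lborel)"
      by (simp only: tr)
    finally show "(\<integral>\<^sup>+P. \<integral>\<^sup>+K'. g P k K' \<partial>photon_space m \<partial>lborel) = ennreal (hfun \<Lambda> k) * (\<integral>\<^sup>+P. \<Psi> P \<partial>lborel)" .
  qed
  also have "\<dots> = (\<integral>\<^sup>+k. ennreal (hfun \<Lambda> k) \<partial>lborel) * (\<integral>\<^sup>+P. \<Psi> P \<partial>lborel)"
  proof (rule nn_integral_multc)
    have "(\<lambda>k. ennreal (hfun \<Lambda> k)) \<in> borel_measurable borel"
      using hfun_meas[of \<Lambda>] by (rule measurable_compose) simp
    then show "(\<lambda>k. ennreal (hfun \<Lambda> k)) \<in> borel_measurable lborel" by simp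
  qed
  also have "(\<integral>\<^sup>+P. \<Psi> P \<partial>lborel) = (\<integral>\<^sup>+z. ennreal ((norm (fst z))\<^sup>2 * G z) \<partial>config_measure m)"
  proof -
    have "(\<lambda>z. ennreal ((norm (fst z))\<^sup>2 * G z)) \<in> borel_measurable (lborel \<Otimes>\<^sub>M photon_space m)"
      by measurable
    from S0.nn_integral_fst[OF this] show ?thesis unfolding \<Psi>_def config_measure_def by simp
  qed
  finally show ?thesis .
qed

lemma term_meas:
  fixes G :: "(real^3) \<times> (nat \<Rightarrow> real^3) \<Rightarrow> real"
  assumes im: "i \<le> m" and Gm[measurable]: "G \<in> borel_measurable (lborel \<Otimes>\<^sub>M photon_space m)"
  shows "(\<lambda>z. ennreal ((norm (fst z + snd z i))\<^sup>2 * hfun \<Lambda> (snd z i) * G (fst z + snd z i, del m i (snd z))))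
       \<in> borel_measurable (config_measure (Suc m))"
proof -
  have ci[measurable]: "(\<lambda>K. K i) \<in> borel_measurable (photon_space (Suc m))"
  proof -
    have "(\<lambda>K. K i) \<in> measurable (photon_space (Suc m)) lborel"
      unfolding photon_space_def using im by (intro measurable_component_singleton) simp
    then show ?thesis by simp
  qed
  show ?thesis unfolding config_measure_def by measurable
qed

lemma sum_rearr:
  fixes X :: "'s \<Rightarrow> 'u \<Rightarrow> 'i \<Rightarrow> 'a::comm_semiring_1"
  shows "(\<Sum>\<sigma>\<in>S. \<Sum>L\<in>U. c * (\<Sum>i\<in>I. h * X \<sigma> L i)) = c * (\<Sum>i\<in>I. h * (\<Sum>\<sigma>\<in>S. \<Sum>L\<in>U. X \<sigma> L i))"
proof -
  have "(\<Sum>\<sigma>\<in>S. \<Sum>L\<in>U. c * (\<Sum>i\<in>I. h * X \<sigma> L i)) = (\<Sum>\<sigma>\<in>S. \<Sum>L\<in>U. \<Sum>i\<in>I. c * h * X \<sigma> L i)"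
    by (simp add: sum_distrib_left mult.assoc)
  also have "\<dots> = (\<Sum>\<sigma>\<in>S. \<Sum>i\<in>I. \<Sum>L\<in>U. c * h * X \<sigma> L i)"
    by (rule sum.cong[OF refl], rule sum.swap)
  also have "\<dots> = (\<Sum>i\<in>I. \<Sum>\<sigma>\<in>S. \<Sum>L\<in>U. c * h * X \<sigma> L i)"
    by (rule sum.swap)
  also have "\<dots> = c * (\<Sum>i\<in>I. h * (\<Sum>\<sigma>\<in>S. \<Sum>L\<in>U. X \<sigma> L i))"
    by (simp add: sum_distrib_left mult.assoc)
  finally show ?thesis .
qed

theorem mainTheorem5:
  shows "\<exists>C::real. C > 0 \<and>
    (\<forall>(\<epsilon> :: nat \<Rightarrow> real^3 \<Rightarrow> real^3) (m::nat) (\<Lambda>::real) (\<psi>::state).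
      polarization \<epsilon> \<longrightarrow> \<Lambda> > 0 \<longrightarrow> m_photon_state m \<psi> \<longrightarrow>
      sector_sum m (\<lambda>\<sigma> L P K. ennreal ((norm P)\<^sup>2 * (cmod (\<psi> \<sigma> L P K))\<^sup>2)) < \<infinity> \<longrightarrow>
      sector_sum m (\<lambda>\<sigma> L P K. ennreal ((\<Sum>i<m. norm (K i)) * (cmod (\<psi> \<sigma> L P K))\<^sup>2)) < \<infinity> \<longrightarrow>
      sector_sum (Suc m) (\<lambda>\<sigma> L P K. ennreal ((cmod (pD_star \<epsilon> \<Lambda> m \<psi> \<sigma> L P K))\<^sup>2
                                      / ((norm P)\<^sup>2 + (\<Sum>i<Suc m. norm (K i)))))
      \<le> ennreal (C * \<Lambda>) *
         (sector_sum m (\<lambda>\<sigma> L P K. ennreal ((norm P)\<^sup>2 * (cmod (\<psi> \<sigma> L P K))\<^sup>2)) +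
          sector_sum m (\<lambda>\<sigma> L P K. ennreal ((\<Sum>i<m. norm (K i)) * (cmod (\<psi> \<sigma> L P K))\<^sup>2))))"
proof (intro exI[of _ 432] conjI allI impI)
  show "(0::real) < 432" by simp
  fix \<epsilon> :: "nat \<Rightarrow> real^3 \<Rightarrow> real^3" and m :: nat and \<Lambda> :: real and \<psi> :: state
  assume pol: "polarization \<epsilon>" and L0: "\<Lambda> > 0" and st: "m_photon_state m \<psi>"
  define H where "H = (\<integral>\<^sup>+k. ennreal (hfun \<Lambda> k) \<partial>lborel)"
  define A\<sigma> where "A\<sigma> \<sigma> L' = (\<integral>\<^sup>+z. ennreal ((norm (fst z))\<^sup>2 * (cmod (\<psi> \<sigma> L' (fst z) (snd z)))\<^sup>2) \<partial>config_measure m)" for \<sigma> L'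
  define A where "A = sector_sum m (\<lambda>\<sigma> L P K. ennreal ((norm P)\<^sup>2 * (cmod (\<psi> \<sigma> L P K))\<^sup>2))"
  define B where "B = sector_sum m (\<lambda>\<sigma> L P K. ennreal ((\<Sum>i<m. norm (K i)) * (cmod (\<psi> \<sigma> L P K))\<^sup>2))"
  have A_eq: "A = (\<Sum>\<sigma>\<in>{1,2::nat}. \<Sum>L\<in>labels m. A\<sigma> \<sigma> L)"
    by (simp add: A_def A\<sigma>_def sector_sum_def)
  have psim: "(\<lambda>z. \<psi> \<sigma> L (fst z) (snd z)) \<in> borel_measurable (lborel \<Otimes>\<^sub>M photon_space m)"
    if "\<sigma> \<in> {1,2}" "L \<in> labels m" for \<sigma> L
    using st that by (auto simp: m_photon_state_def config_measure_def)
  define T where "T \<sigma> L i z = ennreal ((norm (fst z + snd z i))\<^sup>2 * hfun \<Lambda> (snd z i) *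
       (cmod (\<psi> \<sigma> (del m i L) (fst z + snd z i) (del m i (snd z))))\<^sup>2)" for \<sigma> L i z
  have Tint: "(\<integral>\<^sup>+z. T \<sigma> L i z \<partial>config_measure (Suc m)) = H * A\<sigma> \<sigma> (del m i L)"
   and Tm: "T \<sigma> L i \<in> borel_measurable (config_measure (Suc m))"
    if \<sigma>: "\<sigma> \<in> {1,2}" and L: "L \<in> labels (Suc m)" and i: "i < Suc m" for \<sigma> L i
  proof -
    have dl: "del m i L \<in> labels m"
      unfolding labels_def by (rule del_PiE) (use L in \<open>simp add: labels_def\<close>)
    define G where "G = (\<lambda>z. (cmod (\<psi> \<sigma> (del m i L) (fst z) (snd z)))\<^sup>2)"
    have Gm: "G \<in> borel_measurable (lborel \<Otimes>\<^sub>M photon_space m)"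
    proof -
      have cm: "(\<lambda>c::complex. (cmod c)\<^sup>2) \<in> borel_measurable borel" by measurable
      show ?thesis unfolding G_def by (rule measurable_compose[OF psim[OF \<sigma> dl] cm])
    qed
    have G0: "\<And>z. 0 \<le> G z" by (simp add: G_def)
    have im: "i \<le> m" using i by simp
    show "(\<integral>\<^sup>+z. T \<sigma> L i z \<partial>config_measure (Suc m)) = H * A\<sigma> \<sigma> (del m i L)"
      using int_term[OF im Gm G0, of \<Lambda>] unfolding T_def H_def A\<sigma>_def G_def fst_conv snd_conv .
    show "T \<sigma> L i \<in> borel_measurable (config_measure (Suc m))"
      using term_meas[OF im Gm, of \<Lambda>] unfolding T_def G_def fst_conv snd_conv .
  qed
  have step1: "sector_sum (Suc m) (\<lambda>\<sigma> L P K. ennreal ((cmod (pD_star \<epsilon> \<Lambda> m \<psi> \<sigma> L P K))\<^sup>2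
                                      / ((norm P)\<^sup>2 + (\<Sum>i<Suc m. norm (K i)))))
     \<le> (\<Sum>\<sigma>\<in>{1,2::nat}. \<Sum>L\<in>labels (Suc m). \<integral>\<^sup>+z. ennreal (1 / real (Suc m)) * (\<Sum>i<Suc m. T \<sigma> L i z) \<partial>config_measure (Suc m))"
    unfolding sector_sum_def
  proof (intro sum_mono nn_integral_mono)
    fix \<sigma> L z assume \<sigma>: "\<sigma> \<in> {1,2::nat}" and L: "L \<in> labels (Suc m)"
    have Li: "L i \<in> {1,2}" if "i < Suc m" for i
      using L that unfolding labels_def by (auto simp: PiE_iff)
    have pw: "(cmod (pD_star \<epsilon> \<Lambda> m \<psi> \<sigma> L (fst z) (snd z)))\<^sup>2 / ((norm (fst z))\<^sup>2 + (\<Sum>i<Suc m. norm (snd z i)))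
      \<le> (1 / real (Suc m)) * (\<Sum>i<Suc m. (norm (fst z + snd z i))\<^sup>2 * hfun \<Lambda> (snd z i) *
          (cmod (\<psi> \<sigma> (del m i L) (fst z + snd z i) (del m i (snd z))))\<^sup>2)"
      by (rule pointwise[OF pol Li]) simp
    have eq: "ennreal (1 / real (Suc m)) * (\<Sum>i<Suc m. T \<sigma> L i z) = ennreal ((1 / real (Suc m)) * (\<Sum>i<Suc m. (norm (fst z + snd z i))\<^sup>2 * hfun \<Lambda> (snd z i) *
          (cmod (\<psi> \<sigma> (del m i L) (fst z + snd z i) (del m i (snd z))))\<^sup>2))"
    proof -
      have sm: "(\<Sum>i<Suc m. T \<sigma> L i z) = ennreal (\<Sum>i<Suc m. (norm (fst z + snd z i))\<^sup>2 * hfun \<Lambda> (snd z i) *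
          (cmod (\<psi> \<sigma> (del m i L) (fst z + snd z i) (del m i (snd z))))\<^sup>2)"
        unfolding T_def by (rule sum_ennreal) (simp add: hfun_nonneg)
      show ?thesis unfolding sm
        apply (rule ennreal_mult[symmetric])
         apply simp
        apply (intro sum_nonneg mult_nonneg_nonneg)
          apply (simp_all add: hfun_nonneg)
        done
    qed
    show "ennreal ((cmod (pD_star \<epsilon> \<Lambda> m \<psi> \<sigma> L (fst z) (snd z)))\<^sup>2 / ((norm (fst z))\<^sup>2 + (\<Sum>i<Suc m. norm (snd z i))))
       \<le> ennreal (1 / real (Suc m)) * (\<Sum>i<Suc m. T \<sigma> L i z)"
      unfolding eq by (rule ennreal_leI[OF pw])
  qed
  have step2: "(\<Sum>\<sigma>\<in>{1,2::nat}. \<Sum>L\<in>labels (Suc m). \<integral>\<^sup>+z. ennreal (1 / real (Suc m)) * (\<Sum>i<Suc m. T \<sigma> L i z) \<partial>config_measure (Suc m))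
     = (\<Sum>\<sigma>\<in>{1,2::nat}. \<Sum>L\<in>labels (Suc m). ennreal (1 / real (Suc m)) * (\<Sum>i<Suc m. H * A\<sigma> \<sigma> (del m i L)))"
  proof (intro sum.cong refl)
    fix \<sigma> L assume \<sigma>: "\<sigma> \<in> {1,2::nat}" and L: "L \<in> labels (Suc m)"
    have "(\<integral>\<^sup>+z. ennreal (1 / real (Suc m)) * (\<Sum>i<Suc m. T \<sigma> L i z) \<partial>config_measure (Suc m))
       = ennreal (1 / real (Suc m)) * (\<integral>\<^sup>+z. (\<Sum>i<Suc m. T \<sigma> L i z) \<partial>config_measure (Suc m))"
      by (rule nn_integral_cmult) (use Tm[OF \<sigma> L] in measurable)
    also have "(\<integral>\<^sup>+z. (\<Sum>i<Suc m. T \<sigma> L i z) \<partial>config_measure (Suc m)) = (\<Sum>i<Suc m. \<integral>\<^sup>+z. T \<sigma> L i z \<partial>config_measure (Suc m))"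
      by (rule nn_integral_sum) (use Tm[OF \<sigma> L] in simp)
    also have "\<dots> = (\<Sum>i<Suc m. H * A\<sigma> \<sigma> (del m i L))"
      by (rule sum.cong[OF refl]) (use Tint[OF \<sigma> L] in simp)
    finally show "(\<integral>\<^sup>+z. ennreal (1 / real (Suc m)) * (\<Sum>i<Suc m. T \<sigma> L i z) \<partial>config_measure (Suc m))
       = ennreal (1 / real (Suc m)) * (\<Sum>i<Suc m. H * A\<sigma> \<sigma> (del m i L))" .
  qed
  have step3: "(\<Sum>\<sigma>\<in>{1,2::nat}. \<Sum>L\<in>labels (Suc m). ennreal (1 / real (Suc m)) * (\<Sum>i<Suc m. H * A\<sigma> \<sigma> (del m i L)))
     = ennreal (1 / real (Suc m)) * (\<Sum>i<Suc m. H * (\<Sum>\<sigma>\<in>{1,2::nat}. \<Sum>L\<in>labels (Suc m). A\<sigma> \<sigma> (del m i L)))"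
    by (rule sum_rearr)
  have step4: "(\<Sum>\<sigma>\<in>{1,2::nat}. \<Sum>L\<in>labels (Suc m). A\<sigma> \<sigma> (del m i L)) = 2 * A" if "i < Suc m" for i
  proof -
    have "(\<Sum>\<sigma>\<in>{1,2::nat}. \<Sum>L\<in>labels (Suc m). A\<sigma> \<sigma> (del m i L)) = (\<Sum>\<sigma>\<in>{1,2::nat}. 2 * (\<Sum>L\<in>labels m. A\<sigma> \<sigma> L))"
      using that by (intro sum.cong refl labels_sum) simp
    also have "\<dots> = 2 * A" unfolding A_eq by (simp add: sum_distrib_left)
    finally show ?thesis .
  qed
  have step5: "ennreal (1 / real (Suc m)) * (\<Sum>i<Suc m. H * (\<Sum>\<sigma>\<in>{1,2::nat}. \<Sum>L\<in>labels (Suc m). A\<sigma> \<sigma> (del m i L)))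
      = 2 * H * A"
  proof -
    have "(\<Sum>i<Suc m. H * (\<Sum>\<sigma>\<in>{1,2::nat}. \<Sum>L\<in>labels (Suc m). A\<sigma> \<sigma> (del m i L))) = (\<Sum>i<Suc m. H * (2 * A))"
    proof (rule sum.cong[OF refl])
      fix i assume i: "i \<in> {..<Suc m}"
      then have "i < Suc m" by simp
      from step4[OF this] show "H * (\<Sum>\<sigma>\<in>{1,2::nat}. \<Sum>L\<in>labels (Suc m). A\<sigma> \<sigma> (del m i L)) = H * (2 * A)"
        by (simp only:)
    qed
    also have "\<dots> = of_nat (Suc m) * (H * (2 * A))" by simp
    finally have "ennreal (1 / real (Suc m)) * (\<Sum>i<Suc m. H * (\<Sum>\<sigma>\<in>{1,2::nat}. \<Sum>L\<in>labels (Suc m). A\<sigma> \<sigma> (del m i L)))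
       = (ennreal (1 / real (Suc m)) * of_nat (Suc m)) * (H * (2 * A))" by (simp add: mult.assoc)
    also have "ennreal (1 / real (Suc m)) * of_nat (Suc m) = 1"
    proof -
      have "ennreal (1 / real (Suc m)) * of_nat (Suc m) = ennreal (1 / real (Suc m)) * ennreal (real (Suc m))"
        by (simp only: ennreal_of_nat_eq_real_of_nat)
      also have "\<dots> = ennreal (1 / real (Suc m) * real (Suc m))" by (rule ennreal_mult[symmetric]) auto
      also have "\<dots> = 1" by simp
      finally show ?thesis .
    qed
    finally show ?thesis by (simp add: mult_ac)
  qed
  have step6: "2 * H * A \<le> ennreal (432 * \<Lambda>) * (A + B)"
  proof -
    have "2 * H * A \<le> 2 * ennreal (216 * \<Lambda>) * A"
      unfolding H_def using int_hfun[OF L0] by (intro mult_right_mono mult_left_mono) auto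
    also have "2 * ennreal (216 * \<Lambda>) = ennreal (432 * \<Lambda>)"
    proof -
      have "ennreal (2 * (216 * \<Lambda>)) = ennreal 2 * ennreal (216 * \<Lambda>)"
        using L0 by (intro ennreal_mult) auto
      then show ?thesis by simp
    qed
    also have "ennreal (432 * \<Lambda>) * A \<le> ennreal (432 * \<Lambda>) * (A + B)"
      by (intro mult_left_mono) auto
    finally show ?thesis .
  qed
  show "sector_sum (Suc m) (\<lambda>\<sigma> L P K. ennreal ((cmod (pD_star \<epsilon> \<Lambda> m \<psi> \<sigma> L P K))\<^sup>2
                                      / ((norm P)\<^sup>2 + (\<Sum>i<Suc m. norm (K i)))))
      \<le> ennreal (432 * \<Lambda>) *
         (sector_sum m (\<lambda>\<sigma> L P K. ennreal ((norm P)\<^sup>2 * (cmod (\<psi> \<sigma> L P K))\<^sup>2)) +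
          sector_sum m (\<lambda>\<sigma> L P K. ennreal ((\<Sum>i<m. norm (K i)) * (cmod (\<psi> \<sigma> L P K))\<^sup>2)))"
    using step1 step2 step3 step5 step6 unfolding A_def B_def by simp
qed

end
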